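(* Let $A$ be a finite direct product of elementary abelian groups, written additively, let $U$ be an $F$-relevant subgroup of $\mathrm{Aut}(A)$, and let $N(U) = N_{\mathrm{Aut}(A)}(U)$. For $\delta, \lambda \in Z^2(U,A)$ we have $G_\delta \cong G_\lambda$ if and only if there exists $g \in N(U)$ with $g([\delta]) = [\lambda]$ in $H^2(U,A)$.
   Context: $U$ acts on $A$ naturally (as a group of automorphisms), and $Z^2(U,A)$, $B^2(U,A)$, $H^2(U,A)=Z^2(U,A)/B^2(U,A)$ are the groups of $2$-cocycles, $2$-coboundaries and the second cohomology group for this action; $[\delta] = \delta + B^2(U,A)$. For $\delta\in Z^2(U,A)$, $G_\delta$ denotes the extension of $A$ by $U$ defined by $\delta$ (the group on the set $U\times A$ with multiplication twisted by $\delta$ in the standard way, containing $A$ as a normal subgroup with quotient $U$ acting on $A$ via the given action). The group $N(U)$ acts on $Z^2(U,A)$ by $(g(\delta))(u,v) = g\big(\delta(g^{-1}ug, g^{-1}vg)\big)$ for $g\in N(U)$, $u,v\in U$; this leaves $B^2(U,A)$ invariant and induces an action on $H^2(U,A)$ by $g([\delta]) = [g(\delta)]$. A subgroup $N \le \mathrm{Aut}(A)$ centralizes a series through $A$ if there is an $N$-invariant series $A = A_1 > \cdots > A_{l+1} = \{1\}$ with $N$ acting trivially on each $A_i/A_{i+1}$; $U\le\mathrm{Aut}(A)$ is $F$-relevant if no non-trivial normal subgroup of $U$ centralizes a series through $A$. *)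

theory Defs
  imports "HOL-Algebra.Algebra"
begin

definition elementary_abelian :: "('a, 'b) monoid_scheme \<Rightarrow> bool" where
  "elementary_abelian E \<longleftrightarrow> comm_group E \<and>
     (\<exists>p::nat. Factorial_Ring.prime p \<and> (\<forall>x\<in>carrier E. x [^]\<^bsub>E\<^esub> p = \<one>\<^bsub>E\<^esub>))"

definition fin_prod_elem_abelian :: "'a monoid \<Rightarrow> bool" where
  "fin_prod_elem_abelian A \<longleftrightarrow> comm_group A \<and>
     (\<exists>(k::nat) (H::nat \<Rightarrow> 'a set).
        (\<forall>i<k. subgroup (H i) A \<and> elementary_abelian (A\<lparr>carrier := H i\<rparr>)) \<and>
        (\<lambda>x\<in>carrier (product_group {..<k} (\<lambda>i. A\<lparr>carrier := H i\<rparr>)). finprod A x {..<k})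
          \<in> iso (product_group {..<k} (\<lambda>i. A\<lparr>carrier := H i\<rparr>)) A)"

definition centralizes_series :: "'a monoid \<Rightarrow> ('a \<Rightarrow> 'a) set \<Rightarrow> bool" where
  "centralizes_series A N \<longleftrightarrow>
     (\<exists>(l::nat) (S::nat \<Rightarrow> 'a set).
        S 1 = carrier A \<and> S (l + 1) = {\<one>\<^bsub>A\<^esub>} \<and>
        (\<forall>i\<in>{1..l+1}. subgroup (S i) A) \<and>
        (\<forall>i\<in>{1..l}. S (Suc i) \<subset> S i) \<and>
        (\<forall>n\<in>N. \<forall>i\<in>{1..l+1}. n ` S i \<subseteq> S i) \<and>
        (\<forall>n\<in>N. \<forall>i\<in>{1..l}. \<forall>a\<in>S i. n a \<otimes>\<^bsub>A\<^esub> inv\<^bsub>A\<^esub> a \<in> S (Suc i)))"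

definition F_relevant :: "'a monoid \<Rightarrow> ('a \<Rightarrow> 'a) set \<Rightarrow> bool" where
  "F_relevant A U \<longleftrightarrow>
     (\<forall>N. N \<lhd> ((AutoGroup A)\<lparr>carrier := U\<rparr>) \<and> N \<noteq> {\<one>\<^bsub>AutoGroup A\<^esub>}
          \<longrightarrow> \<not> centralizes_series A N)"

definition Z2 :: "'a monoid \<Rightarrow> ('a \<Rightarrow> 'a) set \<Rightarrow> (('a \<Rightarrow> 'a) \<Rightarrow> ('a \<Rightarrow> 'a) \<Rightarrow> 'a) set" where
  "Z2 A U = {\<delta>. (\<forall>u\<in>U. \<forall>v\<in>U. \<delta> u v \<in> carrier A) \<and>
     (\<forall>u\<in>U. \<forall>v\<in>U. \<forall>w\<in>U.
        u (\<delta> v w) \<otimes>\<^bsub>A\<^esub> \<delta> u (v \<otimes>\<^bsub>AutoGroup A\<^esub> w)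
        = \<delta> (u \<otimes>\<^bsub>AutoGroup A\<^esub> v) w \<otimes>\<^bsub>A\<^esub> \<delta> u v)}"

definition B2 :: "'a monoid \<Rightarrow> ('a \<Rightarrow> 'a) set \<Rightarrow> (('a \<Rightarrow> 'a) \<Rightarrow> ('a \<Rightarrow> 'a) \<Rightarrow> 'a) set" where
  "B2 A U = {\<beta>. \<exists>\<phi>. (\<forall>u\<in>U. \<phi> u \<in> carrier A) \<and>
     (\<forall>u\<in>U. \<forall>v\<in>U. \<beta> u v =
        u (\<phi> v) \<otimes>\<^bsub>A\<^esub> inv\<^bsub>A\<^esub> (\<phi> (u \<otimes>\<^bsub>AutoGroup A\<^esub> v)) \<otimes>\<^bsub>A\<^esub> \<phi> u)}"

definition cohomologous :: "'a monoid \<Rightarrow> ('a \<Rightarrow> 'a) set \<Rightarrow>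
    (('a \<Rightarrow> 'a) \<Rightarrow> ('a \<Rightarrow> 'a) \<Rightarrow> 'a) \<Rightarrow> (('a \<Rightarrow> 'a) \<Rightarrow> ('a \<Rightarrow> 'a) \<Rightarrow> 'a) \<Rightarrow> bool" where
  "cohomologous A U \<delta> \<mu> \<longleftrightarrow>
     (\<exists>\<beta>\<in>B2 A U. \<forall>u\<in>U. \<forall>v\<in>U. \<delta> u v = \<mu> u v \<otimes>\<^bsub>A\<^esub> \<beta> u v)"

definition cochain_act :: "'a monoid \<Rightarrow> ('a \<Rightarrow> 'a) \<Rightarrow>
    (('a \<Rightarrow> 'a) \<Rightarrow> ('a \<Rightarrow> 'a) \<Rightarrow> 'a) \<Rightarrow> (('a \<Rightarrow> 'a) \<Rightarrow> ('a \<Rightarrow> 'a) \<Rightarrow> 'a)" where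
  "cochain_act A g \<delta> = (\<lambda>u v. g (\<delta>
      (inv\<^bsub>AutoGroup A\<^esub> g \<otimes>\<^bsub>AutoGroup A\<^esub> u \<otimes>\<^bsub>AutoGroup A\<^esub> g)
      (inv\<^bsub>AutoGroup A\<^esub> g \<otimes>\<^bsub>AutoGroup A\<^esub> v \<otimes>\<^bsub>AutoGroup A\<^esub> g)))"

(* The extension G_\<delta>: the set U x A, where (u,a) stands for a\<cdot>s(u), with multiplication
   (u,a)(v,b) = (uv, a + u(b) + \<delta>(u,v)) *)
definition ext_group :: "'a monoid \<Rightarrow> ('a \<Rightarrow> 'a) set \<Rightarrow>
    (('a \<Rightarrow> 'a) \<Rightarrow> ('a \<Rightarrow> 'a) \<Rightarrow> 'a) \<Rightarrow> (('a \<Rightarrow> 'a) \<times> 'a) monoid" where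
  "ext_group A U \<delta> =
     \<lparr>carrier = U \<times> carrier A,
      monoid.mult = (\<lambda>(u, a) (v, b).
         (u \<otimes>\<^bsub>AutoGroup A\<^esub> v, a \<otimes>\<^bsub>A\<^esub> u b \<otimes>\<^bsub>A\<^esub> \<delta> u v)),
      one = (\<one>\<^bsub>AutoGroup A\<^esub>, inv\<^bsub>A\<^esub> (\<delta> \<one>\<^bsub>AutoGroup A\<^esub> \<one>\<^bsub>AutoGroup A\<^esub>))\<rparr>"

end

theory Submission
  imports Defs
begin


lemma aut_carrier: "carrier (AutoGroup A) = auto A"
  by (simp add: AutoGroup_def)

lemma aut_mult_apply:
  assumes "f \<in> carrier (AutoGroup A)" "h \<in> carrier (AutoGroup A)" "x \<in> carrier A"
  shows "(f \<otimes>\<^bsub>AutoGroup A\<^esub> h) x = f (h x)"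
  using assms by (simp add: AutoGroup_def BijGroup_def auto_def compose_def)

lemma aut_one: "\<one>\<^bsub>AutoGroup A\<^esub> = (\<lambda>x\<in>carrier A. x)"
  by (simp add: AutoGroup_def BijGroup_def)

lemma aut_one_apply: "x \<in> carrier A \<Longrightarrow> \<one>\<^bsub>AutoGroup A\<^esub> x = x"
  by (simp add: aut_one)

lemma aut_eqI:
  assumes "f \<in> carrier (AutoGroup A)" "h \<in> carrier (AutoGroup A)" "\<And>x. x \<in> carrier A \<Longrightarrow> f x = h x"
  shows "f = h"
proof -
  have "f \<in> extensional (carrier A)" "h \<in> extensional (carrier A)"
    using assms(1,2) unfolding aut_carrier auto_def Bij_def by auto
  then show ?thesis using assms(3) by (rule extensionalityI)
qed

lemma aut_hom: "f \<in> carrier (AutoGroup A) \<Longrightarrow> f \<in> hom A A"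
  unfolding aut_carrier auto_def by blast

lemma aut_closed: "f \<in> carrier (AutoGroup A) \<Longrightarrow> x \<in> carrier A \<Longrightarrow> f x \<in> carrier A"
  by (rule hom_in_carrier[OF aut_hom])

lemma aut_bij: "f \<in> carrier (AutoGroup A) \<Longrightarrow> bij_betw f (carrier A) (carrier A)"
  unfolding aut_carrier auto_def Bij_def by blast

lemma aut_mult: "f \<in> carrier (AutoGroup A) \<Longrightarrow> x \<in> carrier A \<Longrightarrow> y \<in> carrier A
   \<Longrightarrow> f (x \<otimes>\<^bsub>A\<^esub> y) = f x \<otimes>\<^bsub>A\<^esub> f y"
  by (simp add: hom_mult aut_hom)

lemma (in group) aut_one_pres: "f \<in> carrier (AutoGroup G) \<Longrightarrow> f \<one> = \<one>"
  by (rule hom_one[OF aut_hom is_group is_group])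

lemma (in group) aut_inv_pres: "f \<in> carrier (AutoGroup G) \<Longrightarrow> x \<in> carrier G \<Longrightarrow> f (inv x) = inv (f x)"
proof -
  assume a: "f \<in> carrier (AutoGroup G)" "x \<in> carrier G"
  have "group_hom G G f" using aut_hom[OF a(1)] is_group by (simp add: group_hom_def group_hom_axioms_def)
  then show ?thesis using a(2) by (rule group_hom.hom_inv)
qed

lemma (in group) aut_inv_apply1:
  assumes "f \<in> carrier (AutoGroup G)" "x \<in> carrier G"
  shows "f ((inv\<^bsub>AutoGroup G\<^esub> f) x) = x"
proof -
  interpret Au: group "AutoGroup G" by (rule AutoGroup)
  have e: "f \<otimes>\<^bsub>AutoGroup G\<^esub> inv\<^bsub>AutoGroup G\<^esub> f = \<one>\<^bsub>AutoGroup G\<^esub>" using assms(1) by simp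
  have "f ((inv\<^bsub>AutoGroup G\<^esub> f) x) = (f \<otimes>\<^bsub>AutoGroup G\<^esub> inv\<^bsub>AutoGroup G\<^esub> f) x"
    using assms by (intro aut_mult_apply[symmetric]) auto
  also have "\<dots> = x" unfolding e using assms(2) by (rule aut_one_apply)
  finally show ?thesis .
qed

lemma (in group) aut_inv_apply2:
  assumes "f \<in> carrier (AutoGroup G)" "x \<in> carrier G"
  shows "(inv\<^bsub>AutoGroup G\<^esub> f) (f x) = x"
proof -
  interpret Au: group "AutoGroup G" by (rule AutoGroup)
  have e: "inv\<^bsub>AutoGroup G\<^esub> f \<otimes>\<^bsub>AutoGroup G\<^esub> f = \<one>\<^bsub>AutoGroup G\<^esub>" using assms(1) by simp
  have "(inv\<^bsub>AutoGroup G\<^esub> f) (f x) = (inv\<^bsub>AutoGroup G\<^esub> f \<otimes>\<^bsub>AutoGroup G\<^esub> f) x"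
    using assms by (intro aut_mult_apply[symmetric]) auto
  also have "\<dots> = x" unfolding e using assms(2) by (rule aut_one_apply)
  finally show ?thesis .
qed



locale cocyc = comm_group A for A :: "'a monoid" (structure) +
  fixes U :: "('a \<Rightarrow> 'a) set" and d :: "('a\<Rightarrow>'a) \<Rightarrow> ('a\<Rightarrow>'a) \<Rightarrow> 'a"
  assumes U: "subgroup U (AutoGroup A)" and d: "d \<in> Z2 A U"
begin

sublocale Au: group "AutoGroup A" by (rule AutoGroup)

lemma uc: "u \<in> U \<Longrightarrow> u \<in> carrier (AutoGroup A)"
  by (rule subgroup.mem_carrier[OF U])

lemma one_U: "\<one>\<^bsub>AutoGroup A\<^esub> \<in> U"
  by (rule subgroup.one_closed[OF U])

lemma mU: "u \<in> U \<Longrightarrow> v \<in> U \<Longrightarrow> u \<otimes>\<^bsub>AutoGroup A\<^esub> v \<in> U"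
  by (rule subgroup.m_closed[OF U])

lemma iU: "u \<in> U \<Longrightarrow> inv\<^bsub>AutoGroup A\<^esub> u \<in> U"
  by (rule subgroup.m_inv_closed[OF U])

lemma uA: "u \<in> U \<Longrightarrow> x \<in> carrier A \<Longrightarrow> u x \<in> carrier A"
  by (rule aut_closed[OF uc])

lemma u_mult: "u \<in> U \<Longrightarrow> x \<in> carrier A \<Longrightarrow> y \<in> carrier A \<Longrightarrow> u (x \<otimes> y) = u x \<otimes> u y"
  by (rule aut_mult[OF uc])

lemma u_inv: "u \<in> U \<Longrightarrow> x \<in> carrier A \<Longrightarrow> u (inv x) = inv (u x)"
  by (rule aut_inv_pres[OF uc])

lemma u_one: "u \<in> U \<Longrightarrow> u \<one> = \<one>"
  by (rule aut_one_pres[OF uc])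

lemma u_comp: "u \<in> U \<Longrightarrow> v \<in> U \<Longrightarrow> x \<in> carrier A \<Longrightarrow> (u \<otimes>\<^bsub>AutoGroup A\<^esub> v) x = u (v x)"
  by (rule aut_mult_apply[OF uc uc])

lemma d_closed: "u \<in> U \<Longrightarrow> v \<in> U \<Longrightarrow> d u v \<in> carrier A"
  using d by (simp add: Z2_def)

lemma cocycle: "u \<in> U \<Longrightarrow> v \<in> U \<Longrightarrow> w \<in> U \<Longrightarrow>
  u (d v w) \<otimes> d u (v \<otimes>\<^bsub>AutoGroup A\<^esub> w) = d (u \<otimes>\<^bsub>AutoGroup A\<^esub> v) w \<otimes> d u v"
  using d by (simp add: Z2_def)

definition e where "e = d \<one>\<^bsub>AutoGroup A\<^esub> \<one>\<^bsub>AutoGroup A\<^esub>"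

lemma e_closed: "e \<in> carrier A" unfolding e_def by (rule d_closed[OF one_U one_U])

lemma d_one_left: assumes "w \<in> U" shows "d \<one>\<^bsub>AutoGroup A\<^esub> w = e"
proof -
  have c: "\<one>\<^bsub>AutoGroup A\<^esub> (d \<one>\<^bsub>AutoGroup A\<^esub> w) \<otimes> d \<one>\<^bsub>AutoGroup A\<^esub> (\<one>\<^bsub>AutoGroup A\<^esub> \<otimes>\<^bsub>AutoGroup A\<^esub> w)
     = d (\<one>\<^bsub>AutoGroup A\<^esub> \<otimes>\<^bsub>AutoGroup A\<^esub> \<one>\<^bsub>AutoGroup A\<^esub>) w \<otimes> d \<one>\<^bsub>AutoGroup A\<^esub> \<one>\<^bsub>AutoGroup A\<^esub>"
    by (rule cocycle) (use one_U assms in auto)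
  have w: "w \<in> carrier (AutoGroup A)" by (rule uc[OF assms])
  have dc: "d \<one>\<^bsub>AutoGroup A\<^esub> w \<in> carrier A" by (rule d_closed) (use one_U assms in auto)
  from c have "d \<one>\<^bsub>AutoGroup A\<^esub> w \<otimes> d \<one>\<^bsub>AutoGroup A\<^esub> w = d \<one>\<^bsub>AutoGroup A\<^esub> w \<otimes> e"
    using w dc by (simp add: aut_one_apply e_def)
  then show ?thesis using dc e_closed by (metis l_cancel)
qed

lemma d_one_right: assumes "u \<in> U" shows "d u \<one>\<^bsub>AutoGroup A\<^esub> = u e"
proof -
  have c: "u (d \<one>\<^bsub>AutoGroup A\<^esub> \<one>\<^bsub>AutoGroup A\<^esub>) \<otimes> d u (\<one>\<^bsub>AutoGroup A\<^esub> \<otimes>\<^bsub>AutoGroup A\<^esub> \<one>\<^bsub>AutoGroup A\<^esub>)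
     = d (u \<otimes>\<^bsub>AutoGroup A\<^esub> \<one>\<^bsub>AutoGroup A\<^esub>) \<one>\<^bsub>AutoGroup A\<^esub> \<otimes> d u \<one>\<^bsub>AutoGroup A\<^esub>"
    by (rule cocycle) (use one_U assms in auto)
  have u: "u \<in> carrier (AutoGroup A)" by (rule uc[OF assms])
  have dc: "d u \<one>\<^bsub>AutoGroup A\<^esub> \<in> carrier A" by (rule d_closed) (use one_U assms in auto)
  from c have "u e \<otimes> d u \<one>\<^bsub>AutoGroup A\<^esub> = d u \<one>\<^bsub>AutoGroup A\<^esub> \<otimes> d u \<one>\<^bsub>AutoGroup A\<^esub>"
    using u by (simp add: e_def)
  then show ?thesis using dc e_closed uA[OF assms e_closed] by (metis r_cancel)
qed

lemma cancel4: "x \<in> carrier A \<Longrightarrow> y \<in> carrier A \<Longrightarrow> x \<otimes> (y \<otimes> (inv x \<otimes> inv y)) = \<one>"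
  by (metis inv_mult m_assoc m_closed r_inv inv_closed)

lemma canc1: "x \<in> carrier A \<Longrightarrow> y \<in> carrier A \<Longrightarrow> x \<otimes> (inv x \<otimes> y) = y"
  by (simp add: m_assoc[symmetric])

lemma canc2: "x \<in> carrier A \<Longrightarrow> y \<in> carrier A \<Longrightarrow> inv x \<otimes> (x \<otimes> y) = y"
  by (simp add: m_assoc[symmetric])

abbreviation "G \<equiv> ext_group A U d"

lemma G_carrier: "carrier G = U \<times> carrier A"
  by (simp add: ext_group_def)

lemma G_mult: "(u, a) \<otimes>\<^bsub>G\<^esub> (v, b) = (u \<otimes>\<^bsub>AutoGroup A\<^esub> v, a \<otimes> u b \<otimes> d u v)"
  by (simp add: ext_group_def)

lemma G_one: "\<one>\<^bsub>G\<^esub> = (\<one>\<^bsub>AutoGroup A\<^esub>, inv e)"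
  by (simp add: ext_group_def e_def)

lemma G_group: "group G"
proof (rule groupI)
  fix x y assume "x \<in> carrier G" "y \<in> carrier G"
  then show "x \<otimes>\<^bsub>G\<^esub> y \<in> carrier G"
    by (auto simp: G_carrier G_mult mU uA d_closed)
next
  show "\<one>\<^bsub>G\<^esub> \<in> carrier G" by (simp add: G_carrier G_one one_U e_closed)
next
  fix x y z assume xyz: "x \<in> carrier G" "y \<in> carrier G" "z \<in> carrier G"
  obtain u a where x: "x = (u, a)" "u \<in> U" "a \<in> carrier A" using xyz(1) by (auto simp: G_carrier)
  obtain v b where y: "y = (v, b)" "v \<in> U" "b \<in> carrier A" using xyz(2) by (auto simp: G_carrier)
  obtain w c where z: "z = (w, c)" "w \<in> U" "c \<in> carrier A" using xyz(3) by (auto simp: G_carrier)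
  have uv: "u \<otimes>\<^bsub>AutoGroup A\<^esub> v \<in> U" using x y by (simp add: mU)
  have vw: "v \<otimes>\<^bsub>AutoGroup A\<^esub> w \<in> U" using z y by (simp add: mU)
  have c1: "(u \<otimes>\<^bsub>AutoGroup A\<^esub> v) c = u (v c)" using x y z by (simp add: u_comp)
  have c2: "u (b \<otimes> v c \<otimes> d v w) = u b \<otimes> u (v c) \<otimes> u (d v w)"
    using x y z by (simp add: u_mult uA d_closed)
  have cc: "u (d v w) \<otimes> d u (v \<otimes>\<^bsub>AutoGroup A\<^esub> w) = d (u \<otimes>\<^bsub>AutoGroup A\<^esub> v) w \<otimes> d u v"
    using x y z by (simp add: cocycle)
  have "a \<otimes> u b \<otimes> d u v \<otimes> (u \<otimes>\<^bsub>AutoGroup A\<^esub> v) c \<otimes> d (u \<otimes>\<^bsub>AutoGroup A\<^esub> v) w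
      = a \<otimes> u (b \<otimes> v c \<otimes> d v w) \<otimes> d u (v \<otimes>\<^bsub>AutoGroup A\<^esub> w)"
  proof -
    have "a \<otimes> u (b \<otimes> v c \<otimes> d v w) \<otimes> d u (v \<otimes>\<^bsub>AutoGroup A\<^esub> w)
        = a \<otimes> u b \<otimes> u (v c) \<otimes> (u (d v w) \<otimes> d u (v \<otimes>\<^bsub>AutoGroup A\<^esub> w))"
      unfolding c2 using x y z vw by (simp add: m_assoc uA d_closed)
    also have "\<dots> = a \<otimes> u b \<otimes> u (v c) \<otimes> (d (u \<otimes>\<^bsub>AutoGroup A\<^esub> v) w \<otimes> d u v)" unfolding cc ..
    also have "\<dots> = a \<otimes> u b \<otimes> d u v \<otimes> u (v c) \<otimes> d (u \<otimes>\<^bsub>AutoGroup A\<^esub> v) w"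
      using x y z uv by (simp add: m_ac uA d_closed)
    finally show ?thesis unfolding c1 by simp
  qed
  then show "x \<otimes>\<^bsub>G\<^esub> y \<otimes>\<^bsub>G\<^esub> z = x \<otimes>\<^bsub>G\<^esub> (y \<otimes>\<^bsub>G\<^esub> z)"
    using x y z by (simp add: G_mult uc Au.m_assoc)
next
  fix x assume "x \<in> carrier G"
  then obtain u a where x: "x = (u, a)" "u \<in> U" "a \<in> carrier A" by (auto simp: G_carrier)
  show "\<one>\<^bsub>G\<^esub> \<otimes>\<^bsub>G\<^esub> x = x"
    using x by (simp add: G_one G_mult d_one_left uc aut_one_apply e_closed m_ac canc1 canc2)
next
  fix x assume "x \<in> carrier G"
  then obtain u a where x: "x = (u, a)" "u \<in> U" "a \<in> carrier A" by (auto simp: G_carrier)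
  define u' where "u' = inv\<^bsub>AutoGroup A\<^esub> u"
  have u': "u' \<in> U" using x u'_def by (simp add: iU)
  define y where "y = inv e \<otimes> inv (u' a) \<otimes> inv (d u' u)"
  have yc: "y \<in> carrier A" using y_def u' x by (simp add: e_closed uA d_closed)
  have "(u', y) \<otimes>\<^bsub>G\<^esub> x = \<one>\<^bsub>G\<^esub>"
    using x u' by (simp add: G_mult G_one y_def u'_def uc e_closed uA d_closed m_ac cancel4)
  then show "\<exists>y\<in>carrier G. y \<otimes>\<^bsub>G\<^esub> x = \<one>\<^bsub>G\<^esub>" using u' yc by (auto simp: G_carrier)
qed

sublocale Gg: group G by (rule G_group)

definition iota where "iota a = (\<one>\<^bsub>AutoGroup A\<^esub>, a \<otimes> inv e)"

lemma iota_carrier: "a \<in> carrier A \<Longrightarrow> iota a \<in> carrier G"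
  by (simp add: iota_def G_carrier one_U e_closed)

lemma iota_mult: "a \<in> carrier A \<Longrightarrow> b \<in> carrier A \<Longrightarrow> iota a \<otimes>\<^bsub>G\<^esub> iota b = iota (a \<otimes> b)"
  by (simp add: iota_def G_mult one_U uc d_one_left aut_one_apply e_closed m_ac canc1 canc2)

lemma iota_inj: "a \<in> carrier A \<Longrightarrow> b \<in> carrier A \<Longrightarrow> iota a = iota b \<Longrightarrow> a = b"
  by (simp add: iota_def e_closed)

lemma iota_hom: "iota \<in> hom A G"
  by (rule homI) (simp_all add: iota_carrier iota_mult)

lemma iota_one: "iota \<one> = \<one>\<^bsub>G\<^esub>"
  by (simp add: iota_def G_one e_closed)

lemma iota_inv: "a \<in> carrier A \<Longrightarrow> iota (inv a) = inv\<^bsub>G\<^esub> (iota a)"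
proof -
  assume a: "a \<in> carrier A"
  have "group_hom A G iota" by (simp add: group_hom_def group_hom_axioms_def iota_hom is_group G_group)
  then show ?thesis using a by (rule group_hom.hom_inv)
qed

lemma conj_iota: "u \<in> U \<Longrightarrow> x \<in> carrier A \<Longrightarrow> a \<in> carrier A \<Longrightarrow>
   (u, x) \<otimes>\<^bsub>G\<^esub> iota a = iota (u a) \<otimes>\<^bsub>G\<^esub> (u, x)"
  by (simp add: iota_def G_mult uc one_U d_one_left d_one_right aut_one_apply e_closed u_mult u_inv uA
      Au.l_one Au.r_one m_ac canc1 canc2)

lemma decomp: "v \<in> U \<Longrightarrow> a \<in> carrier A \<Longrightarrow> (v, a) = iota a \<otimes>\<^bsub>G\<^esub> (v, \<one>)"
  by (simp add: iota_def G_mult uc one_U d_one_left aut_one_apply e_closed Au.l_one m_ac canc1 canc2)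

lemma pair_mult_one: "v \<in> U \<Longrightarrow> w \<in> U \<Longrightarrow> (v, \<one>) \<otimes>\<^bsub>G\<^esub> (w, \<one>) = (v \<otimes>\<^bsub>AutoGroup A\<^esub> w, d v w)"
  by (simp add: G_mult u_one d_closed)

abbreviation "K \<equiv> {\<one>\<^bsub>AutoGroup A\<^esub>} \<times> carrier A"

lemma K_iota: "K = iota ` carrier A"
proof
  show "iota ` carrier A \<subseteq> K" by (auto simp: iota_def e_closed)
  show "K \<subseteq> iota ` carrier A"
  proof
    fix x assume "x \<in> K"
    then obtain c where c: "x = (\<one>\<^bsub>AutoGroup A\<^esub>, c)" "c \<in> carrier A" by auto
    have "x = iota (c \<otimes> e)" using c by (simp add: iota_def e_closed m_assoc)
    then show "x \<in> iota ` carrier A" using c e_closed by blast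
  qed
qed

lemma K_comm: "x \<in> K \<Longrightarrow> y \<in> K \<Longrightarrow> x \<otimes>\<^bsub>G\<^esub> y = y \<otimes>\<^bsub>G\<^esub> x"
  unfolding K_iota by (auto simp: iota_mult m_comm)

abbreviation "UG \<equiv> (AutoGroup A)\<lparr>carrier := U\<rparr>"

lemma UG_group: "group UG"
  by (rule Au.subgroup_imp_group[OF U])

lemma fst_hom: "fst \<in> hom G UG"
  by (rule homI) (auto simp: G_carrier G_mult)

lemma fst_group_hom: "group_hom G UG fst"
  by (simp add: group_hom_def group_hom_axioms_def fst_hom G_group UG_group)

lemma fst_surj: "fst ` carrier G = carrier UG"
proof -
  have "fst ` (U \<times> carrier A) = U" using one_closed by auto
  then show ?thesis by (simp add: G_carrier)
qed

lemma K_kernel: "K = kernel G UG fst"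
  by (auto simp: kernel_def G_carrier one_U)

lemma K_normal: "K \<lhd> G"
  unfolding K_kernel by (rule group_hom.normal_kernel[OF fst_group_hom])

end


lemma (in group) lcanc: "x \<in> carrier G \<Longrightarrow> y \<in> carrier G \<Longrightarrow> inv x \<otimes> (x \<otimes> y) = y"
  by (simp add: m_assoc[symmetric])

lemma (in group) lcanc': "x \<in> carrier G \<Longrightarrow> y \<in> carrier G \<Longrightarrow> x \<otimes> (inv x \<otimes> y) = y"
  by (simp add: m_assoc[symmetric])

lemma (in group) conj_cancel: "g \<in> carrier G \<Longrightarrow> v \<in> carrier G \<Longrightarrow> inv g \<otimes> (g \<otimes> v \<otimes> inv g) \<otimes> g = v"
  by (simp add: m_assoc lcanc)

lemma (in group) conj_cancel': "g \<in> carrier G \<Longrightarrow> v \<in> carrier G \<Longrightarrow> g \<otimes> (inv g \<otimes> v \<otimes> g) \<otimes> inv g = v"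
  by (simp add: m_assoc lcanc')

lemma (in group) conj_mult: "g \<in> carrier G \<Longrightarrow> v \<in> carrier G \<Longrightarrow> w \<in> carrier G \<Longrightarrow>
   g \<otimes> (v \<otimes> w) \<otimes> inv g = (g \<otimes> v \<otimes> inv g) \<otimes> (g \<otimes> w \<otimes> inv g)"
  by (simp add: m_assoc lcanc)

lemma (in group) normalizer_conj:
  assumes "H \<subseteq> carrier G"
  shows "g \<in> normalizer G H \<longleftrightarrow> g \<in> carrier G \<and> (\<lambda>h. g \<otimes> h \<otimes> inv g) ` H = H"
proof -
  have "g <# H #> inv g = (\<lambda>h. g \<otimes> h \<otimes> inv g) ` H"
    unfolding l_coset_def r_coset_def by auto
  then show ?thesis using assms unfolding normalizer_def stabilizer_def by auto
qed

context cocyc begin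

lemma iota_mult_pair: "w \<in> U \<Longrightarrow> c \<in> carrier A \<Longrightarrow> y \<in> carrier A \<Longrightarrow>
   iota c \<otimes>\<^bsub>G\<^esub> (w, y) = (w, c \<otimes> y)"
  by (simp add: iota_def G_mult uc one_U d_one_left aut_one_apply e_closed Au.l_one m_ac canc1 canc2)

end

lemma if_dir:
  assumes D: "cocyc A U d1" and L: "cocyc A U d2"
  and g: "g \<in> normalizer (AutoGroup A) U" and coh: "cohomologous A U (cochain_act A g d1) d2"
  shows "ext_group A U d1 \<cong> ext_group A U d2"
proof -
  interpret D: cocyc A U d1 by (rule D)
  interpret L: cocyc A U d2 by (rule L)
  have Usub: "U \<subseteq> carrier (AutoGroup A)" using D.uc by blast
  have gc: "g \<in> carrier (AutoGroup A)" and gU: "(\<lambda>h. g \<otimes>\<^bsub>AutoGroup A\<^esub> h \<otimes>\<^bsub>AutoGroup A\<^esub> inv\<^bsub>AutoGroup A\<^esub> g) ` U = U"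
    using g D.Au.normalizer_conj[OF Usub] by auto
  have cU: "v \<in> U \<Longrightarrow> g \<otimes>\<^bsub>AutoGroup A\<^esub> v \<otimes>\<^bsub>AutoGroup A\<^esub> inv\<^bsub>AutoGroup A\<^esub> g \<in> U" for v
    using gU by blast
  have cU': "u \<in> U \<Longrightarrow> inv\<^bsub>AutoGroup A\<^esub> g \<otimes>\<^bsub>AutoGroup A\<^esub> u \<otimes>\<^bsub>AutoGroup A\<^esub> g \<in> U" for u
  proof -
    assume u: "u \<in> U"
    then obtain h where h: "h \<in> U" "u = g \<otimes>\<^bsub>AutoGroup A\<^esub> h \<otimes>\<^bsub>AutoGroup A\<^esub> inv\<^bsub>AutoGroup A\<^esub> g"
      using gU by blast
    then show ?thesis using D.Au.conj_cancel[OF gc D.uc[OF h(1)]] by simp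
  qed
  have gA: "x \<in> carrier A \<Longrightarrow> g x \<in> carrier A" for x using aut_closed[OF gc] .
  have igc: "inv\<^bsub>AutoGroup A\<^esub> g \<in> carrier (AutoGroup A)" using gc by simp
  have igA: "x \<in> carrier A \<Longrightarrow> (inv\<^bsub>AutoGroup A\<^esub> g) x \<in> carrier A" for x using aut_closed[OF igc] .
  from coh obtain \<beta> where \<beta>: "\<beta> \<in> B2 A U"
    and cb: "\<And>u v. u \<in> U \<Longrightarrow> v \<in> U \<Longrightarrow> cochain_act A g d1 u v = d2 u v \<otimes>\<^bsub>A\<^esub> \<beta> u v"
    unfolding cohomologous_def by blast
  from \<beta> obtain p where pA: "\<And>u. u \<in> U \<Longrightarrow> p u \<in> carrier A"
    and pb: "\<And>u v. u \<in> U \<Longrightarrow> v \<in> U \<Longrightarrow> \<beta> u v =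
        u (p v) \<otimes>\<^bsub>A\<^esub> inv\<^bsub>A\<^esub> (p (u \<otimes>\<^bsub>AutoGroup A\<^esub> v)) \<otimes>\<^bsub>A\<^esub> p u"
    unfolding B2_def by blast
  define cj where "cj v = g \<otimes>\<^bsub>AutoGroup A\<^esub> v \<otimes>\<^bsub>AutoGroup A\<^esub> inv\<^bsub>AutoGroup A\<^esub> g" for v
  define \<Phi> where "\<Phi> = (\<lambda>(v, a). (cj v, g a \<otimes>\<^bsub>A\<^esub> p (cj v)))"
  have cjU: "v \<in> U \<Longrightarrow> cj v \<in> U" for v using cU cj_def by simp
  have cj_apply: "v \<in> U \<Longrightarrow> b \<in> carrier A \<Longrightarrow> cj v (g b) = g (v b)" for v b
  proof -
    assume v: "v \<in> U" and b: "b \<in> carrier A"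
    have "cj v (g b) = g (v ((inv\<^bsub>AutoGroup A\<^esub> g) (g b)))"
      unfolding cj_def using gc igc D.uc[OF v] b
      by (simp add: aut_mult_apply gA igA)
    then show ?thesis using D.aut_inv_apply2[OF gc b] by simp
  qed
  have cj_mult: "v \<in> U \<Longrightarrow> w \<in> U \<Longrightarrow> cj (v \<otimes>\<^bsub>AutoGroup A\<^esub> w) = cj v \<otimes>\<^bsub>AutoGroup A\<^esub> cj w" for v w
    unfolding cj_def using D.Au.conj_mult[OF gc D.uc D.uc] by blast
  have cj_back: "v \<in> U \<Longrightarrow> inv\<^bsub>AutoGroup A\<^esub> g \<otimes>\<^bsub>AutoGroup A\<^esub> cj v \<otimes>\<^bsub>AutoGroup A\<^esub> g = v" for v
    unfolding cj_def using D.Au.conj_cancel[OF gc D.uc] by blast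
  have cocy: "v \<in> U \<Longrightarrow> w \<in> U \<Longrightarrow> g (d1 v w) = d2 (cj v) (cj w) \<otimes>\<^bsub>A\<^esub>
      (cj v (p (cj w)) \<otimes>\<^bsub>A\<^esub> inv\<^bsub>A\<^esub> (p (cj v \<otimes>\<^bsub>AutoGroup A\<^esub> cj w)) \<otimes>\<^bsub>A\<^esub> p (cj v))" for v w
  proof -
    assume v: "v \<in> U" and w: "w \<in> U"
    have "cochain_act A g d1 (cj v) (cj w) = g (d1 v w)"
      unfolding cochain_act_def using cj_back v w by simp
    then show ?thesis using cb[OF cjU[OF v] cjU[OF w]] pb[OF cjU[OF v] cjU[OF w]] by simp
  qed
  have hom: "\<Phi> \<in> hom (ext_group A U d1) (ext_group A U d2)"
  proof (rule homI)
    fix x assume "x \<in> carrier (ext_group A U d1)"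
    then show "\<Phi> x \<in> carrier (ext_group A U d2)"
      by (auto simp: D.G_carrier L.G_carrier \<Phi>_def cjU gA pA)
  next
    fix x y assume xy: "x \<in> carrier (ext_group A U d1)" "y \<in> carrier (ext_group A U d1)"
    obtain v a where x: "x = (v, a)" "v \<in> U" "a \<in> carrier A" using xy(1) by (auto simp: D.G_carrier)
    obtain w b where y: "y = (w, b)" "w \<in> U" "b \<in> carrier A" using xy(2) by (auto simp: D.G_carrier)
    have vw: "v \<otimes>\<^bsub>AutoGroup A\<^esub> w \<in> U" using x y D.mU by blast
    have cvw: "cj (v \<otimes>\<^bsub>AutoGroup A\<^esub> w) = cj v \<otimes>\<^bsub>AutoGroup A\<^esub> cj w" using cj_mult x y by blast
    have cvwU: "cj v \<otimes>\<^bsub>AutoGroup A\<^esub> cj w \<in> U" using cjU x y D.mU by blast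
    define P where "P = p (cj v \<otimes>\<^bsub>AutoGroup A\<^esub> cj w)"
    have PA: "P \<in> carrier A" unfolding P_def using pA cvwU by blast
    have e1: "g (a \<otimes>\<^bsub>A\<^esub> v b \<otimes>\<^bsub>A\<^esub> d1 v w) = g a \<otimes>\<^bsub>A\<^esub> g (v b) \<otimes>\<^bsub>A\<^esub> g (d1 v w)"
      using x y gc by (simp add: aut_mult D.uA D.d_closed)
    have e2: "cj v (g b \<otimes>\<^bsub>A\<^esub> p (cj w)) = g (v b) \<otimes>\<^bsub>A\<^esub> cj v (p (cj w))"
      using x y cjU pA gA by (simp add: D.u_mult cj_apply)
    have lhs: "g (a \<otimes>\<^bsub>A\<^esub> v b \<otimes>\<^bsub>A\<^esub> d1 v w) \<otimes>\<^bsub>A\<^esub> P =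
      (g a \<otimes>\<^bsub>A\<^esub> g (v b) \<otimes>\<^bsub>A\<^esub> d2 (cj v) (cj w) \<otimes>\<^bsub>A\<^esub> cj v (p (cj w)) \<otimes>\<^bsub>A\<^esub> p (cj v)) \<otimes>\<^bsub>A\<^esub> (inv\<^bsub>A\<^esub> P \<otimes>\<^bsub>A\<^esub> P)"
      unfolding e1 cocy[OF x(2) y(2)] P_def[symmetric]
      using x y cjU[OF x(2)] cjU[OF y(2)] pA[OF cjU[OF x(2)]] pA[OF cjU[OF y(2)]] gA[OF x(3)] PA
        gA[OF D.uA[OF x(2) y(3)]] L.d_closed[OF cjU[OF x(2)] cjU[OF y(2)]] D.uA[OF cjU[OF x(2)] pA[OF cjU[OF y(2)]]]
      by (simp only: D.m_ac D.m_closed D.inv_closed)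
    have "\<Phi> (x \<otimes>\<^bsub>ext_group A U d1\<^esub> y) = (cj v \<otimes>\<^bsub>AutoGroup A\<^esub> cj w,
       (g a \<otimes>\<^bsub>A\<^esub> g (v b) \<otimes>\<^bsub>A\<^esub> d2 (cj v) (cj w) \<otimes>\<^bsub>A\<^esub> cj v (p (cj w)) \<otimes>\<^bsub>A\<^esub> p (cj v)))"
      using x y lhs PA cvw unfolding P_def
      by (simp add: \<Phi>_def D.G_mult gA D.uA D.d_closed L.d_closed pA cjU)
    also have "\<dots> = \<Phi> x \<otimes>\<^bsub>ext_group A U d2\<^esub> \<Phi> y"
      using x y e2 by (simp add: \<Phi>_def L.G_mult gA D.uA L.d_closed pA cjU D.m_ac)
    finally show "\<Phi> (x \<otimes>\<^bsub>ext_group A U d1\<^esub> y) = \<Phi> x \<otimes>\<^bsub>ext_group A U d2\<^esub> \<Phi> y" .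
  qed
  have inj: "inj_on \<Phi> (carrier (ext_group A U d1))"
  proof (rule inj_onI)
    fix x y assume xy: "x \<in> carrier (ext_group A U d1)" "y \<in> carrier (ext_group A U d1)" "\<Phi> x = \<Phi> y"
    obtain v a where x: "x = (v, a)" "v \<in> U" "a \<in> carrier A" using xy(1) by (auto simp: D.G_carrier)
    obtain w b where y: "y = (w, b)" "w \<in> U" "b \<in> carrier A" using xy(2) by (auto simp: D.G_carrier)
    have c: "cj v = cj w" and s: "g a \<otimes>\<^bsub>A\<^esub> p (cj v) = g b \<otimes>\<^bsub>A\<^esub> p (cj w)"
      using xy(3) x y by (auto simp: \<Phi>_def)
    have "v = inv\<^bsub>AutoGroup A\<^esub> g \<otimes>\<^bsub>AutoGroup A\<^esub> cj v \<otimes>\<^bsub>AutoGroup A\<^esub> g" by (rule cj_back[OF x(2), symmetric])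
    also have "\<dots> = inv\<^bsub>AutoGroup A\<^esub> g \<otimes>\<^bsub>AutoGroup A\<^esub> cj w \<otimes>\<^bsub>AutoGroup A\<^esub> g" by (simp only: c)
    also have "\<dots> = w" by (rule cj_back[OF y(2)])
    finally have vw: "v = w" .
    have s': "g a \<otimes>\<^bsub>A\<^esub> p (cj w) = g b \<otimes>\<^bsub>A\<^esub> p (cj w)" using s vw by simp
    have "g a = g b" using s' D.right_cancel[OF pA[OF cjU[OF y(2)]] gA[OF x(3)] gA[OF y(3)]] by blast
    then have "a = b" using D.aut_inv_apply2[OF gc x(3)] D.aut_inv_apply2[OF gc y(3)] by metis
    then show "x = y" using x y vw by simp
  qed
  have surj: "\<Phi> ` carrier (ext_group A U d1) = carrier (ext_group A U d2)"
  proof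
    show "\<Phi> ` carrier (ext_group A U d1) \<subseteq> carrier (ext_group A U d2)"
      by (rule image_subsetI, rule hom_in_carrier[OF hom])
    show "carrier (ext_group A U d2) \<subseteq> \<Phi> ` carrier (ext_group A U d1)"
    proof
      fix z assume "z \<in> carrier (ext_group A U d2)"
      then obtain u c where z: "z = (u, c)" "u \<in> U" "c \<in> carrier A" by (auto simp: L.G_carrier)
      define v where "v = inv\<^bsub>AutoGroup A\<^esub> g \<otimes>\<^bsub>AutoGroup A\<^esub> u \<otimes>\<^bsub>AutoGroup A\<^esub> g"
      have vU: "v \<in> U" unfolding v_def by (rule cU'[OF z(2)])
      have cv: "cj v = u" unfolding cj_def v_def using D.Au.conj_cancel'[OF gc D.uc[OF z(2)]] .
      define a where "a = (inv\<^bsub>AutoGroup A\<^esub> g) (c \<otimes>\<^bsub>A\<^esub> inv\<^bsub>A\<^esub> p u)"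
      have aA: "a \<in> carrier A" unfolding a_def using igA z pA by simp
      have ga: "g a = c \<otimes>\<^bsub>A\<^esub> inv\<^bsub>A\<^esub> p u" unfolding a_def using D.aut_inv_apply1[OF gc] z pA by simp
      have "\<Phi> (v, a) = z" using ga cv z pA by (simp add: \<Phi>_def D.m_assoc)
      moreover have "(v, a) \<in> carrier (ext_group A U d1)" using vU aA by (simp add: D.G_carrier)
      ultimately show "z \<in> \<Phi> ` carrier (ext_group A U d1)" by blast
    qed
  qed
  have "\<Phi> \<in> iso (ext_group A U d1) (ext_group A U d2)"
    unfolding iso_def bij_betw_def using hom inj surj by simp
  then show ?thesis by (rule is_isoI)
qed



locale isoctx = D: cocyc A U d1 + L: cocyc A U d2 for A :: "'a monoid" and U d1 d2 +
  fixes \<phi> :: "('a \<Rightarrow> 'a) \<times> 'a \<Rightarrow> ('a \<Rightarrow> 'a) \<times> 'a"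
  assumes phi: "\<phi> \<in> iso (ext_group A U d1) (ext_group A U d2)"
    and fin: "finite (carrier A)" and Fr: "F_relevant A U"
begin

lemma phi_hom: "\<phi> \<in> hom D.G L.G" using phi by (simp add: iso_def)
lemma phi_inj: "inj_on \<phi> (carrier D.G)" using phi by (simp add: iso_def bij_betw_def)
lemma phi_surj: "\<phi> ` carrier D.G = carrier L.G" using phi by (simp add: iso_def bij_betw_def)
lemma phi_gh: "group_hom D.G L.G \<phi>"
  by (simp add: group_hom_def group_hom_axioms_def phi_hom D.G_group L.G_group)
lemma phi_mult: "x \<in> carrier D.G \<Longrightarrow> y \<in> carrier D.G \<Longrightarrow> \<phi> (x \<otimes>\<^bsub>D.G\<^esub> y) = \<phi> x \<otimes>\<^bsub>L.G\<^esub> \<phi> y"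
  by (rule hom_mult[OF phi_hom])
lemma phi_carrier: "x \<in> carrier D.G \<Longrightarrow> \<phi> x \<in> carrier L.G"
  by (rule hom_in_carrier[OF phi_hom])

definition B where "B = \<phi> ` D.K"

lemma DK_sub: "D.K \<subseteq> carrier D.G" by (auto simp: D.G_carrier D.one_U)

lemma B_normal: "B \<lhd> L.G"
  unfolding B_def by (rule normal.surj_hom_normal_subgroup[OF D.K_normal phi_gh phi_surj])

lemma B_sub: "B \<subseteq> carrier L.G" unfolding B_def using DK_sub phi_carrier by blast

lemma B_comm: "x \<in> B \<Longrightarrow> y \<in> B \<Longrightarrow> x \<otimes>\<^bsub>L.G\<^esub> y = y \<otimes>\<^bsub>L.G\<^esub> x"
proof -
  assume "x \<in> B" "y \<in> B"
  then obtain k1 k2 where k: "k1 \<in> D.K" "k2 \<in> D.K" "x = \<phi> k1" "y = \<phi> k2" unfolding B_def by blast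
  have c: "k1 \<in> carrier D.G" "k2 \<in> carrier D.G" using k DK_sub by blast+
  have "x \<otimes>\<^bsub>L.G\<^esub> y = \<phi> (k1 \<otimes>\<^bsub>D.G\<^esub> k2)" using k c by (simp add: phi_mult)
  also have "\<dots> = \<phi> (k2 \<otimes>\<^bsub>D.G\<^esub> k1)" using D.K_comm[OF k(1,2)] by simp
  also have "\<dots> = y \<otimes>\<^bsub>L.G\<^esub> x" using k c by (simp add: phi_mult)
  finally show ?thesis .
qed

definition N where "N = fst ` B"

lemma N_normal: "N \<lhd> (AutoGroup A)\<lparr>carrier := U\<rparr>"
  unfolding N_def by (rule normal.surj_hom_normal_subgroup[OF B_normal L.fst_group_hom L.fst_surj])

lemma NU: "N \<subseteq> U" unfolding N_def using B_sub by (auto simp: L.G_carrier)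

definition C where "C = {c \<in> carrier A. L.iota c \<in> B}"

lemma B_sg: "subgroup B L.G" using B_normal by (rule normal_imp_subgroup)

lemma C_sub: "subgroup C A"
proof (rule D.subgroupI)
  show "C \<subseteq> carrier A" unfolding C_def by blast
  have "L.iota \<one>\<^bsub>A\<^esub> \<in> B" unfolding L.iota_one using subgroup.one_closed[OF B_sg] .
  then show "C \<noteq> {}" unfolding C_def by blast
next
  fix a assume "a \<in> C"
  then have a: "a \<in> carrier A" "L.iota a \<in> B" unfolding C_def by auto
  have "L.iota (inv\<^bsub>A\<^esub> a) \<in> B" using a by (simp add: L.iota_inv subgroup.m_inv_closed[OF B_sg])
  then show "inv\<^bsub>A\<^esub> a \<in> C" using a unfolding C_def by simp
next
  fix a b assume "a \<in> C" "b \<in> C"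
  then have a: "a \<in> carrier A" "L.iota a \<in> B" "b \<in> carrier A" "L.iota b \<in> B" unfolding C_def by auto
  have "L.iota (a \<otimes>\<^bsub>A\<^esub> b) \<in> B" using a by (simp add: L.iota_mult[symmetric] subgroup.m_closed[OF B_sg])
  then show "a \<otimes>\<^bsub>A\<^esub> b \<in> C" using a unfolding C_def by simp
qed

lemma N_elem: assumes "n \<in> N" obtains y where "(n, y) \<in> B" "n \<in> U" "y \<in> carrier A"
proof -
  obtain b where b: "b \<in> B" "n = fst b" using assms unfolding N_def by blast
  then have "b \<in> carrier L.G" using B_sub by blast
  then obtain y where "b = (n, y)" "n \<in> U" "y \<in> carrier A" using b by (auto simp: L.G_carrier)
  then show ?thesis using that b by blast
qed

lemma conj_B: assumes "(n, y) \<in> B" "n \<in> U" "y \<in> carrier A" "a \<in> carrier A"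
  shows "L.iota (n a) = (n, y) \<otimes>\<^bsub>L.G\<^esub> L.iota a \<otimes>\<^bsub>L.G\<^esub> inv\<^bsub>L.G\<^esub> (n, y)"
proof -
  have byc: "(n, y) \<in> carrier L.G" using assms by (simp add: L.G_carrier)
  have "(n, y) \<otimes>\<^bsub>L.G\<^esub> L.iota a = L.iota (n a) \<otimes>\<^bsub>L.G\<^esub> (n, y)"
    using assms by (simp add: L.conj_iota)
  then show ?thesis
    using L.Gg.inv_solve_right[OF L.iota_carrier[OF L.uA[OF assms(2,4)]] L.Gg.m_closed[OF byc L.iota_carrier[OF assms(4)]] byc]
    by simp
qed

lemma act_comm: assumes "n \<in> N" "a \<in> carrier A" shows "n a \<otimes>\<^bsub>A\<^esub> inv\<^bsub>A\<^esub> a \<in> C"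
proof -
  obtain y where y: "(n, y) \<in> B" "n \<in> U" "y \<in> carrier A" using N_elem[OF assms(1)] by blast
  define b where "b = (n, y)"
  have bc: "b \<in> carrier L.G" using y b_def by (simp add: L.G_carrier)
  have ic: "L.iota a \<in> carrier L.G" using L.iota_carrier[OF assms(2)] .
  have naA: "n a \<in> carrier A" using L.uA y(2) assms(2) by blast
  have "L.iota (n a \<otimes>\<^bsub>A\<^esub> inv\<^bsub>A\<^esub> a) = L.iota (n a) \<otimes>\<^bsub>L.G\<^esub> inv\<^bsub>L.G\<^esub> (L.iota a)"
    using naA assms(2) by (simp add: L.iota_mult[symmetric] L.iota_inv)
  also have "\<dots> = b \<otimes>\<^bsub>L.G\<^esub> L.iota a \<otimes>\<^bsub>L.G\<^esub> inv\<^bsub>L.G\<^esub> b \<otimes>\<^bsub>L.G\<^esub> inv\<^bsub>L.G\<^esub> (L.iota a)"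
    unfolding b_def using conj_B[OF y assms(2)] by simp
  also have "\<dots> = b \<otimes>\<^bsub>L.G\<^esub> (L.iota a \<otimes>\<^bsub>L.G\<^esub> inv\<^bsub>L.G\<^esub> b \<otimes>\<^bsub>L.G\<^esub> inv\<^bsub>L.G\<^esub> (L.iota a))"
    using bc ic by (simp add: L.Gg.m_assoc)
  finally have eq: "L.iota (n a \<otimes>\<^bsub>A\<^esub> inv\<^bsub>A\<^esub> a) = b \<otimes>\<^bsub>L.G\<^esub> (L.iota a \<otimes>\<^bsub>L.G\<^esub> inv\<^bsub>L.G\<^esub> b \<otimes>\<^bsub>L.G\<^esub> inv\<^bsub>L.G\<^esub> (L.iota a))" .
  have bB: "b \<in> B" using y b_def by simp
  have "inv\<^bsub>L.G\<^esub> b \<in> B" using subgroup.m_inv_closed[OF B_sg bB] .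
  then have "L.iota a \<otimes>\<^bsub>L.G\<^esub> inv\<^bsub>L.G\<^esub> b \<otimes>\<^bsub>L.G\<^esub> inv\<^bsub>L.G\<^esub> (L.iota a) \<in> B"
    using normal.inv_op_closed2[OF B_normal ic] by blast
  then have "L.iota (n a \<otimes>\<^bsub>A\<^esub> inv\<^bsub>A\<^esub> a) \<in> B" unfolding eq using subgroup.m_closed[OF B_sg bB] by blast
  then show ?thesis unfolding C_def using naA assms(2) by simp
qed

lemma act_fix: assumes "n \<in> N" "c \<in> C" shows "n c = c"
proof -
  obtain y where y: "(n, y) \<in> B" "n \<in> U" "y \<in> carrier A" using N_elem[OF assms(1)] by blast
  have c: "c \<in> carrier A" "L.iota c \<in> B" using assms(2) unfolding C_def by auto
  have bc: "(n, y) \<in> carrier L.G" using y by (simp add: L.G_carrier)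
  have "L.iota (n c) \<otimes>\<^bsub>L.G\<^esub> (n, y) = (n, y) \<otimes>\<^bsub>L.G\<^esub> L.iota c"
    using y c by (simp add: L.conj_iota)
  also have "\<dots> = L.iota c \<otimes>\<^bsub>L.G\<^esub> (n, y)" using B_comm[OF y(1) c(2)] .
  finally have "L.iota (n c) = L.iota c"
    using L.Gg.right_cancel[OF bc L.iota_carrier[OF L.uA[OF y(2) c(1)]] L.iota_carrier[OF c(1)]] by blast
  then show ?thesis using L.iota_inj L.uA[OF y(2) c(1)] c(1) by blast
qed

lemma N_trivial: "N = {\<one>\<^bsub>AutoGroup A\<^esub>}"
proof (rule ccontr)
  assume ne: "N \<noteq> {\<one>\<^bsub>AutoGroup A\<^esub>}"
  have oneN: "\<one>\<^bsub>AutoGroup A\<^esub> \<in> N"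
    using subgroup.one_closed[OF normal_imp_subgroup[OF N_normal]] by simp
  obtain n where n: "n \<in> N" "n \<noteq> \<one>\<^bsub>AutoGroup A\<^esub>" using ne oneN by blast
  have nU: "n \<in> U" using n(1) NU by blast
  have "\<exists>a\<in>carrier A. n a \<noteq> a"
  proof (rule ccontr)
    assume "\<not> (\<exists>a\<in>carrier A. n a \<noteq> a)"
    then have "\<And>x. x \<in> carrier A \<Longrightarrow> n x = \<one>\<^bsub>AutoGroup A\<^esub> x" by (simp add: aut_one_apply)
    then have "n = \<one>\<^bsub>AutoGroup A\<^esub>" by (rule aut_eqI[OF L.uc[OF nU] D.Au.one_closed])
    then show False using n(2) by simp
  qed
  then obtain a where a: "a \<in> carrier A" "n a \<noteq> a" by blast
  have naA: "n a \<in> carrier A" using L.uA[OF nU a(1)] .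
  have Csub: "C \<subseteq> carrier A" unfolding C_def by blast
  have oneC: "\<one>\<^bsub>A\<^esub> \<in> C" using subgroup.one_closed[OF C_sub] .
  have cA: "C \<noteq> carrier A" using act_fix[OF n(1)] a by blast
  have nonone: "n a \<otimes>\<^bsub>A\<^esub> inv\<^bsub>A\<^esub> a \<noteq> \<one>\<^bsub>A\<^esub>"
  proof
    assume "n a \<otimes>\<^bsub>A\<^esub> inv\<^bsub>A\<^esub> a = \<one>\<^bsub>A\<^esub>"
    then have "n a = \<one>\<^bsub>A\<^esub> \<otimes>\<^bsub>A\<^esub> a" using D.inv_solve_right'[OF D.one_closed naA a(1)] by blast
    then show False using a by simp
  qed
  have c1: "C \<noteq> {\<one>\<^bsub>A\<^esub>}" using act_comm[OF n(1) a(1)] nonone by blast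
  define S where "S = (\<lambda>i::nat. if i = 1 then carrier A else if i = 2 then C else {\<one>\<^bsub>A\<^esub>})"
  have i3: "\<And>i. i \<in> {1..2+1} \<Longrightarrow> i = 1 \<or> i = 2 \<or> i = (3::nat)" by auto
  have i2: "\<And>i. i \<in> {1..2} \<Longrightarrow> i = 1 \<or> i = (2::nat)" by auto
  have P1: "S 1 = carrier A" by (simp add: S_def)
  have P2: "S (2 + 1) = {\<one>\<^bsub>A\<^esub>}" by (simp add: S_def)
  have P3: "\<forall>i\<in>{1..2+1}. subgroup (S i) A"
  proof
    fix i :: nat assume "i \<in> {1..2+1}"
    then consider "i = 1" | "i = 2" | "i = 3" using i3 by blast
    then show "subgroup (S i) A"
      by cases (simp_all add: S_def D.subgroup_self C_sub D.triv_subgroup)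
  qed
  have P4: "\<forall>i\<in>{1..2}. S (Suc i) \<subset> S i"
  proof
    fix i :: nat assume "i \<in> {1..2}"
    then consider "i = 1" | "i = 2" using i2 by blast
    then show "S (Suc i) \<subset> S i"
    proof cases
      case 1 then show ?thesis using Csub cA by (auto simp: S_def)
    next
      case 2 then show ?thesis using oneC c1 by (auto simp: S_def)
    qed
  qed
  have P5: "\<forall>m\<in>N. \<forall>i\<in>{1..2+1}. m ` S i \<subseteq> S i"
  proof (intro ballI)
    fix m and i :: nat assume m: "m \<in> N" and i: "i \<in> {1..2+1}"
    have mU: "m \<in> U" using m NU by blast
    consider "i = 1" | "i = 2" | "i = 3" using i3 i by blast
    then show "m ` S i \<subseteq> S i"
    proof cases
      case 1 then show ?thesis using L.uA[OF mU] by (auto simp: S_def)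
    next
      case 2 then show ?thesis using act_fix[OF m] by (auto simp: S_def)
    next
      case 3 then show ?thesis using L.u_one[OF mU] by (auto simp: S_def)
    qed
  qed
  have P6: "\<forall>m\<in>N. \<forall>i\<in>{1..2}. \<forall>x\<in>S i. m x \<otimes>\<^bsub>A\<^esub> inv\<^bsub>A\<^esub> x \<in> S (Suc i)"
  proof (intro ballI)
    fix m and i :: nat and x assume m: "m \<in> N" and i: "i \<in> {1..2}" and x: "x \<in> S i"
    consider "i = 1" | "i = 2" using i2 i by blast
    then show "m x \<otimes>\<^bsub>A\<^esub> inv\<^bsub>A\<^esub> x \<in> S (Suc i)"
    proof cases
      case 1 then show ?thesis using act_comm[OF m] x by (simp add: S_def)
    next
      case 2
      then have xC: "x \<in> C" using x by (simp add: S_def)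
      then have "m x = x" using act_fix[OF m] by blast
      then show ?thesis using 2 xC Csub by (auto simp: S_def)
    qed
  qed
  have "centralizes_series A N"
    unfolding centralizes_series_def
    apply (rule exI[where x="2::nat"])
    apply (rule exI[where x=S])
    using P1 P2 P3 P4 P5 P6 by blast
  then show False using Fr N_normal ne unfolding F_relevant_def by blast
qed

lemma B_eq: "B = L.K"
proof -
  have sub: "B \<subseteq> L.K"
  proof
    fix b assume b: "b \<in> B"
    then have "fst b \<in> N" unfolding N_def by blast
    then have "fst b = \<one>\<^bsub>AutoGroup A\<^esub>" using N_trivial by simp
    moreover have "b \<in> carrier L.G" using b B_sub by blast
    ultimately show "b \<in> L.K" by (auto simp: L.G_carrier)
  qed
  have "card B = card D.K" unfolding B_def
    by (rule card_image[OF inj_on_subset[OF phi_inj DK_sub]])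
  moreover have "finite L.K" using fin by simp
  ultimately show ?thesis using card_subset_eq sub by metis
qed

definition gg where "gg = (\<lambda>a\<in>carrier A. snd (\<phi> (D.iota a)) \<otimes>\<^bsub>A\<^esub> L.e)"

lemma phi_iota: assumes a: "a \<in> carrier A"
  shows "gg a \<in> carrier A" "\<phi> (D.iota a) = L.iota (gg a)"
proof -
  have "D.iota a \<in> D.K" unfolding D.K_iota using a by (rule imageI)
  then have "\<phi> (D.iota a) \<in> B" unfolding B_def by (rule imageI)
  then have "\<phi> (D.iota a) \<in> L.K" using B_eq by simp
  then obtain y where y: "\<phi> (D.iota a) = (\<one>\<^bsub>AutoGroup A\<^esub>, y)" "y \<in> carrier A" by auto
  have g: "gg a = y \<otimes>\<^bsub>A\<^esub> L.e" unfolding gg_def using a y by simp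
  show "gg a \<in> carrier A" using g y L.e_closed by simp
  show "\<phi> (D.iota a) = L.iota (gg a)"
    unfolding g L.iota_def using y L.e_closed by (simp add: D.m_assoc)
qed

lemma gg_mult: "a \<in> carrier A \<Longrightarrow> b \<in> carrier A \<Longrightarrow> gg (a \<otimes>\<^bsub>A\<^esub> b) = gg a \<otimes>\<^bsub>A\<^esub> gg b"
proof -
  assume a: "a \<in> carrier A" and b: "b \<in> carrier A"
  have ab: "a \<otimes>\<^bsub>A\<^esub> b \<in> carrier A" using a b by simp
  have "L.iota (gg (a \<otimes>\<^bsub>A\<^esub> b)) = \<phi> (D.iota a \<otimes>\<^bsub>D.G\<^esub> D.iota b)"
    using phi_iota(2)[OF ab] D.iota_mult[OF a b] by simp
  also have "\<dots> = \<phi> (D.iota a) \<otimes>\<^bsub>L.G\<^esub> \<phi> (D.iota b)"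
    using phi_mult D.iota_carrier a b by blast
  also have "\<dots> = L.iota (gg a \<otimes>\<^bsub>A\<^esub> gg b)"
    using phi_iota[OF a] phi_iota[OF b] by (simp add: L.iota_mult)
  finally show ?thesis using L.iota_inj phi_iota(1)[OF ab] phi_iota(1)[OF a] phi_iota(1)[OF b] by simp
qed

lemma gg_aut: "gg \<in> carrier (AutoGroup A)"
proof -
  have hom: "gg \<in> hom A A" by (rule homI) (simp_all add: phi_iota(1) gg_mult)
  have inj: "inj_on gg (carrier A)"
  proof (rule inj_onI)
    fix a b assume a: "a \<in> carrier A" and b: "b \<in> carrier A" and e: "gg a = gg b"
    have "\<phi> (D.iota a) = \<phi> (D.iota b)" using phi_iota(2)[OF a] phi_iota(2)[OF b] e by simp
    then have "D.iota a = D.iota b" using inj_onD[OF phi_inj] D.iota_carrier a b by blast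
    then show "a = b" using D.iota_inj a b by blast
  qed
  have surj: "gg ` carrier A = carrier A"
  proof
    show "gg ` carrier A \<subseteq> carrier A" using phi_iota(1) by blast
    show "carrier A \<subseteq> gg ` carrier A"
    proof
      fix c assume c: "c \<in> carrier A"
      have "L.iota c \<in> L.K" unfolding L.K_iota using c by (rule imageI)
      then have "L.iota c \<in> B" using B_eq by simp
      then have "L.iota c \<in> \<phi> ` (D.iota ` carrier A)" unfolding B_def D.K_iota .
      then obtain a where a: "a \<in> carrier A" "L.iota c = \<phi> (D.iota a)" by blast
      then have "L.iota c = L.iota (gg a)" using phi_iota(2) by simp
      then have "c = gg a" using L.iota_inj c phi_iota(1)[OF a(1)] by blast
      then show "c \<in> gg ` carrier A" using a(1) by blast
    qed
  qed
  have "gg \<in> extensional (carrier A)" unfolding gg_def by simp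
  then have "gg \<in> Bij (carrier A)" using inj surj by (simp add: Bij_def bij_betw_def)
  then show ?thesis using hom by (simp add: aut_carrier auto_def)
qed

lemma gA: "x \<in> carrier A \<Longrightarrow> gg x \<in> carrier A" using phi_iota(1) .

lemma sigma: assumes u: "u \<in> U" and x: "x \<in> carrier A"
  shows "fst (\<phi> (u, x)) = gg \<otimes>\<^bsub>AutoGroup A\<^esub> u \<otimes>\<^bsub>AutoGroup A\<^esub> inv\<^bsub>AutoGroup A\<^esub> gg"
proof -
  have pc: "\<phi> (u, x) \<in> carrier L.G" using phi_carrier u x by (simp add: D.G_carrier)
  then obtain s y where sy: "\<phi> (u, x) = (s, y)" "s \<in> U" "y \<in> carrier A" by (auto simp: L.G_carrier)
  have ux: "(u, x) \<in> carrier D.G" using u x by (simp add: D.G_carrier)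
  have key: "s (gg a) = gg (u a)" if a: "a \<in> carrier A" for a
  proof -
    have uaA: "u a \<in> carrier A" using D.uA[OF u a] .
    have "(s, y) \<otimes>\<^bsub>L.G\<^esub> L.iota (gg a) = \<phi> ((u, x) \<otimes>\<^bsub>D.G\<^esub> D.iota a)"
      using phi_mult[OF ux D.iota_carrier[OF a]] phi_iota(2)[OF a] sy by simp
    also have "\<dots> = \<phi> (D.iota (u a) \<otimes>\<^bsub>D.G\<^esub> (u, x))" using D.conj_iota[OF u x a] by simp
    also have "\<dots> = L.iota (gg (u a)) \<otimes>\<^bsub>L.G\<^esub> (s, y)"
      using phi_mult[OF D.iota_carrier[OF uaA] ux] phi_iota(2)[OF uaA] sy by simp
    finally have e1: "(s, y) \<otimes>\<^bsub>L.G\<^esub> L.iota (gg a) = L.iota (gg (u a)) \<otimes>\<^bsub>L.G\<^esub> (s, y)" .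
    have e2: "(s, y) \<otimes>\<^bsub>L.G\<^esub> L.iota (gg a) = L.iota (s (gg a)) \<otimes>\<^bsub>L.G\<^esub> (s, y)"
      using L.conj_iota[OF sy(2,3) gA[OF a]] .
    have syc: "(s, y) \<in> carrier L.G" using sy by (simp add: L.G_carrier)
    have "L.iota (s (gg a)) = L.iota (gg (u a))"
      using e1 e2 L.Gg.right_cancel[OF syc L.iota_carrier[OF L.uA[OF sy(2) gA[OF a]]] L.iota_carrier[OF gA[OF uaA]]]
      by simp
    then show ?thesis using L.iota_inj L.uA[OF sy(2) gA[OF a]] gA[OF uaA] by blast
  qed
  have gc: "gg \<in> carrier (AutoGroup A)" by (rule gg_aut)
  have igc: "inv\<^bsub>AutoGroup A\<^esub> gg \<in> carrier (AutoGroup A)" using gc by simp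
  have uc: "u \<in> carrier (AutoGroup A)" using D.uc[OF u] .
  have "s = gg \<otimes>\<^bsub>AutoGroup A\<^esub> u \<otimes>\<^bsub>AutoGroup A\<^esub> inv\<^bsub>AutoGroup A\<^esub> gg"
  proof (rule aut_eqI[OF L.uc[OF sy(2)]])
    show "gg \<otimes>\<^bsub>AutoGroup A\<^esub> u \<otimes>\<^bsub>AutoGroup A\<^esub> inv\<^bsub>AutoGroup A\<^esub> gg \<in> carrier (AutoGroup A)"
      using gc igc uc by simp
  next
    fix z assume z: "z \<in> carrier A"
    have iz: "(inv\<^bsub>AutoGroup A\<^esub> gg) z \<in> carrier A" using aut_closed[OF igc z] .
    have "(gg \<otimes>\<^bsub>AutoGroup A\<^esub> u \<otimes>\<^bsub>AutoGroup A\<^esub> inv\<^bsub>AutoGroup A\<^esub> gg) z = gg (u ((inv\<^bsub>AutoGroup A\<^esub> gg) z))"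
      using gc uc igc z iz by (simp add: aut_mult_apply)
    also have "\<dots> = s (gg ((inv\<^bsub>AutoGroup A\<^esub> gg) z))" using key[OF iz] by simp
    also have "\<dots> = s z" using D.aut_inv_apply1[OF gc z] by simp
    finally show "s z = (gg \<otimes>\<^bsub>AutoGroup A\<^esub> u \<otimes>\<^bsub>AutoGroup A\<^esub> inv\<^bsub>AutoGroup A\<^esub> gg) z" by simp
  qed
  then show ?thesis using sy by simp
qed

lemma Usub: "U \<subseteq> carrier (AutoGroup A)" using D.uc by blast

lemma gg_img: "(\<lambda>h. gg \<otimes>\<^bsub>AutoGroup A\<^esub> h \<otimes>\<^bsub>AutoGroup A\<^esub> inv\<^bsub>AutoGroup A\<^esub> gg) ` U = U"
proof
  show "(\<lambda>h. gg \<otimes>\<^bsub>AutoGroup A\<^esub> h \<otimes>\<^bsub>AutoGroup A\<^esub> inv\<^bsub>AutoGroup A\<^esub> gg) ` U \<subseteq> U"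
  proof (rule image_subsetI)
    fix h assume h: "h \<in> U"
    have "\<phi> (h, \<one>\<^bsub>A\<^esub>) \<in> carrier L.G" using phi_carrier h by (simp add: D.G_carrier)
    then have "fst (\<phi> (h, \<one>\<^bsub>A\<^esub>)) \<in> U" by (auto simp: L.G_carrier)
    then show "gg \<otimes>\<^bsub>AutoGroup A\<^esub> h \<otimes>\<^bsub>AutoGroup A\<^esub> inv\<^bsub>AutoGroup A\<^esub> gg \<in> U"
      using sigma[OF h D.one_closed] by simp
  qed
  show "U \<subseteq> (\<lambda>h. gg \<otimes>\<^bsub>AutoGroup A\<^esub> h \<otimes>\<^bsub>AutoGroup A\<^esub> inv\<^bsub>AutoGroup A\<^esub> gg) ` U"
  proof
    fix u assume u: "u \<in> U"
    have "(u, \<one>\<^bsub>A\<^esub>) \<in> carrier L.G" using u by (simp add: L.G_carrier)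
    then have "(u, \<one>\<^bsub>A\<^esub>) \<in> \<phi> ` carrier D.G" using phi_surj by simp
    then obtain h x where hx: "h \<in> U" "x \<in> carrier A" "(u, \<one>\<^bsub>A\<^esub>) = \<phi> (h, x)" by (auto simp: D.G_carrier)
    have "u = fst (\<phi> (h, x))" using hx(3) by (metis fst_conv)
    then have "u = gg \<otimes>\<^bsub>AutoGroup A\<^esub> h \<otimes>\<^bsub>AutoGroup A\<^esub> inv\<^bsub>AutoGroup A\<^esub> gg" using sigma[OF hx(1,2)] by simp
    then show "u \<in> (\<lambda>h. gg \<otimes>\<^bsub>AutoGroup A\<^esub> h \<otimes>\<^bsub>AutoGroup A\<^esub> inv\<^bsub>AutoGroup A\<^esub> gg) ` U" using hx(1) by blast
  qed
qed

lemma gg_norm: "gg \<in> normalizer (AutoGroup A) U"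
  using D.Au.normalizer_conj[OF Usub] gg_aut gg_img by blast

lemma cjU': assumes u: "u \<in> U" shows "inv\<^bsub>AutoGroup A\<^esub> gg \<otimes>\<^bsub>AutoGroup A\<^esub> u \<otimes>\<^bsub>AutoGroup A\<^esub> gg \<in> U"
proof -
  obtain h where h: "h \<in> U" "u = gg \<otimes>\<^bsub>AutoGroup A\<^esub> h \<otimes>\<^bsub>AutoGroup A\<^esub> inv\<^bsub>AutoGroup A\<^esub> gg"
    using u gg_img by blast
  then show ?thesis using D.Au.conj_cancel[OF gg_aut D.uc[OF h(1)]] by simp
qed

definition hh where "hh u = snd (\<phi> (inv\<^bsub>AutoGroup A\<^esub> gg \<otimes>\<^bsub>AutoGroup A\<^esub> u \<otimes>\<^bsub>AutoGroup A\<^esub> gg, \<one>\<^bsub>A\<^esub>))"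

lemma phi0: assumes u: "u \<in> U"
  shows "\<phi> (inv\<^bsub>AutoGroup A\<^esub> gg \<otimes>\<^bsub>AutoGroup A\<^esub> u \<otimes>\<^bsub>AutoGroup A\<^esub> gg, \<one>\<^bsub>A\<^esub>) = (u, hh u)"
proof (rule prod_eqI)
  show "snd (\<phi> (inv\<^bsub>AutoGroup A\<^esub> gg \<otimes>\<^bsub>AutoGroup A\<^esub> u \<otimes>\<^bsub>AutoGroup A\<^esub> gg, \<one>\<^bsub>A\<^esub>)) = snd (u, hh u)"
    by (simp add: hh_def)
  show "fst (\<phi> (inv\<^bsub>AutoGroup A\<^esub> gg \<otimes>\<^bsub>AutoGroup A\<^esub> u \<otimes>\<^bsub>AutoGroup A\<^esub> gg, \<one>\<^bsub>A\<^esub>)) = fst (u, hh u)"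
    using sigma[OF cjU'[OF u] D.one_closed] D.Au.conj_cancel'[OF gg_aut D.uc[OF u]] by simp
qed

lemma hhA: "u \<in> U \<Longrightarrow> hh u \<in> carrier A"
proof -
  assume u: "u \<in> U"
  have "\<phi> (inv\<^bsub>AutoGroup A\<^esub> gg \<otimes>\<^bsub>AutoGroup A\<^esub> u \<otimes>\<^bsub>AutoGroup A\<^esub> gg, \<one>\<^bsub>A\<^esub>) \<in> carrier L.G"
    using phi_carrier cjU'[OF u] by (simp add: D.G_carrier)
  then show ?thesis using phi0[OF u] by (simp add: L.G_carrier)
qed

lemma gg_coh: "cohomologous A U (cochain_act A gg d1) d2"
proof -
  define \<beta> where "\<beta> u v = u (hh v) \<otimes>\<^bsub>A\<^esub> inv\<^bsub>A\<^esub> (hh (u \<otimes>\<^bsub>AutoGroup A\<^esub> v)) \<otimes>\<^bsub>A\<^esub> hh u" for u v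
  have \<beta>B: "\<beta> \<in> B2 A U" unfolding B2_def \<beta>_def using hhA by blast
  have main: "cochain_act A gg d1 u v = d2 u v \<otimes>\<^bsub>A\<^esub> \<beta> u v" if u: "u \<in> U" and v: "v \<in> U" for u v
  proof -
    define v0 where "v0 = inv\<^bsub>AutoGroup A\<^esub> gg \<otimes>\<^bsub>AutoGroup A\<^esub> u \<otimes>\<^bsub>AutoGroup A\<^esub> gg"
    define w0 where "w0 = inv\<^bsub>AutoGroup A\<^esub> gg \<otimes>\<^bsub>AutoGroup A\<^esub> v \<otimes>\<^bsub>AutoGroup A\<^esub> gg"
    have v0U: "v0 \<in> U" unfolding v0_def by (rule cjU'[OF u])
    have w0U: "w0 \<in> U" unfolding w0_def by (rule cjU'[OF v])
    have uv: "u \<otimes>\<^bsub>AutoGroup A\<^esub> v \<in> U" using D.mU u v by blast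
    have igc: "inv\<^bsub>AutoGroup A\<^esub> gg \<in> carrier (AutoGroup A)" using gg_aut by simp
    have vw0: "v0 \<otimes>\<^bsub>AutoGroup A\<^esub> w0 = inv\<^bsub>AutoGroup A\<^esub> gg \<otimes>\<^bsub>AutoGroup A\<^esub> (u \<otimes>\<^bsub>AutoGroup A\<^esub> v) \<otimes>\<^bsub>AutoGroup A\<^esub> gg"
      unfolding v0_def w0_def using D.Au.conj_mult[OF igc D.uc[OF u] D.uc[OF v]] gg_aut by simp
    have ca: "cochain_act A gg d1 u v = gg (d1 v0 w0)" unfolding cochain_act_def v0_def w0_def ..
    have dA: "d1 v0 w0 \<in> carrier A" using D.d_closed[OF v0U w0U] .
    have vw0U: "v0 \<otimes>\<^bsub>AutoGroup A\<^esub> w0 \<in> U" using D.mU v0U w0U by blast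
    have c1: "(v0, \<one>\<^bsub>A\<^esub>) \<in> carrier D.G" "(w0, \<one>\<^bsub>A\<^esub>) \<in> carrier D.G" using v0U w0U by (simp_all add: D.G_carrier)
    have c2: "(v0 \<otimes>\<^bsub>AutoGroup A\<^esub> w0, \<one>\<^bsub>A\<^esub>) \<in> carrier D.G" using vw0U by (simp add: D.G_carrier)
    have "\<phi> ((v0, \<one>\<^bsub>A\<^esub>) \<otimes>\<^bsub>D.G\<^esub> (w0, \<one>\<^bsub>A\<^esub>)) = (u, hh u) \<otimes>\<^bsub>L.G\<^esub> (v, hh v)"
      using phi_mult[OF c1] phi0[OF u] phi0[OF v] unfolding v0_def w0_def by simp
    also have "\<dots> = (u \<otimes>\<^bsub>AutoGroup A\<^esub> v, hh u \<otimes>\<^bsub>A\<^esub> u (hh v) \<otimes>\<^bsub>A\<^esub> d2 u v)" by (simp add: L.G_mult)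
    finally have e1: "\<phi> ((v0, \<one>\<^bsub>A\<^esub>) \<otimes>\<^bsub>D.G\<^esub> (w0, \<one>\<^bsub>A\<^esub>)) = (u \<otimes>\<^bsub>AutoGroup A\<^esub> v, hh u \<otimes>\<^bsub>A\<^esub> u (hh v) \<otimes>\<^bsub>A\<^esub> d2 u v)" .
    have "(v0, \<one>\<^bsub>A\<^esub>) \<otimes>\<^bsub>D.G\<^esub> (w0, \<one>\<^bsub>A\<^esub>) = D.iota (d1 v0 w0) \<otimes>\<^bsub>D.G\<^esub> (v0 \<otimes>\<^bsub>AutoGroup A\<^esub> w0, \<one>\<^bsub>A\<^esub>)"
      using D.pair_mult_one[OF v0U w0U] D.decomp[OF vw0U dA] by simp
    then have "\<phi> ((v0, \<one>\<^bsub>A\<^esub>) \<otimes>\<^bsub>D.G\<^esub> (w0, \<one>\<^bsub>A\<^esub>)) = \<phi> (D.iota (d1 v0 w0)) \<otimes>\<^bsub>L.G\<^esub> \<phi> (v0 \<otimes>\<^bsub>AutoGroup A\<^esub> w0, \<one>\<^bsub>A\<^esub>)"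
      using phi_mult[OF D.iota_carrier[OF dA] c2] by simp
    also have "\<dots> = L.iota (gg (d1 v0 w0)) \<otimes>\<^bsub>L.G\<^esub> (u \<otimes>\<^bsub>AutoGroup A\<^esub> v, hh (u \<otimes>\<^bsub>AutoGroup A\<^esub> v))"
      using phi_iota(2)[OF dA] phi0[OF uv] vw0 by simp
    also have "\<dots> = (u \<otimes>\<^bsub>AutoGroup A\<^esub> v, gg (d1 v0 w0) \<otimes>\<^bsub>A\<^esub> hh (u \<otimes>\<^bsub>AutoGroup A\<^esub> v))"
      using L.iota_mult_pair[OF uv gA[OF dA] hhA[OF uv]] .
    finally have "gg (d1 v0 w0) \<otimes>\<^bsub>A\<^esub> hh (u \<otimes>\<^bsub>AutoGroup A\<^esub> v) = hh u \<otimes>\<^bsub>A\<^esub> u (hh v) \<otimes>\<^bsub>A\<^esub> d2 u v"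
      using e1 by simp
    note eq = this
    define xv where "xv = gg (d1 v0 w0)"
    define pv where "pv = hh (u \<otimes>\<^bsub>AutoGroup A\<^esub> v)"
    have xvA: "xv \<in> carrier A" unfolding xv_def using gA[OF dA] .
    have pvA: "pv \<in> carrier A" unfolding pv_def using hhA[OF uv] .
    have oth: "hh u \<in> carrier A" "u (hh v) \<in> carrier A" "d2 u v \<in> carrier A"
      using hhA[OF u] L.uA[OF u hhA[OF v]] L.d_closed[OF u v] by auto
    have "xv = (xv \<otimes>\<^bsub>A\<^esub> pv) \<otimes>\<^bsub>A\<^esub> inv\<^bsub>A\<^esub> pv" using xvA pvA by (simp add: D.m_assoc)
    also have "\<dots> = (hh u \<otimes>\<^bsub>A\<^esub> u (hh v) \<otimes>\<^bsub>A\<^esub> d2 u v) \<otimes>\<^bsub>A\<^esub> inv\<^bsub>A\<^esub> pv"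
      using eq unfolding xv_def pv_def by simp
    also have "\<dots> = d2 u v \<otimes>\<^bsub>A\<^esub> (u (hh v) \<otimes>\<^bsub>A\<^esub> inv\<^bsub>A\<^esub> pv \<otimes>\<^bsub>A\<^esub> hh u)"
      using oth pvA by (simp add: D.m_ac)
    finally show ?thesis unfolding ca xv_def \<beta>_def pv_def .
  qed
  show ?thesis unfolding cohomologous_def using \<beta>B main by blast
qed

end


theorem theorem3p5:
  fixes A :: "'a monoid" and U :: "('a \<Rightarrow> 'a) set"
    and \<delta> lam :: "('a \<Rightarrow> 'a) \<Rightarrow> ('a \<Rightarrow> 'a) \<Rightarrow> 'a"
  assumes "finite (carrier A)"
    and "fin_prod_elem_abelian A"
    and "subgroup U (AutoGroup A)"
    and "F_relevant A U"
    and "\<delta> \<in> Z2 A U" and "lam \<in> Z2 A U"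
  shows "ext_group A U \<delta> \<cong> ext_group A U lam \<longleftrightarrow>
    (\<exists>g\<in>normalizer (AutoGroup A) U. cohomologous A U (cochain_act A g \<delta>) lam)"
proof -
  have cg: "comm_group A" using assms(2) unfolding fin_prod_elem_abelian_def by blast
  have D: "cocyc A U \<delta>" unfolding cocyc_def cocyc_axioms_def using cg assms(3,5) by blast
  have L: "cocyc A U lam" unfolding cocyc_def cocyc_axioms_def using cg assms(3,6) by blast
  show ?thesis
  proof
    assume "ext_group A U \<delta> \<cong> ext_group A U lam"
    then obtain \<phi> where phi: "\<phi> \<in> iso (ext_group A U \<delta>) (ext_group A U lam)" unfolding is_iso_def by blast
    have I: "isoctx A U \<delta> lam \<phi>"
      unfolding isoctx_def isoctx_axioms_def using D L phi assms(1,4) by blast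
    show "\<exists>g\<in>normalizer (AutoGroup A) U. cohomologous A U (cochain_act A g \<delta>) lam"
      using isoctx.gg_norm[OF I] isoctx.gg_coh[OF I] by blast
  next
    assume "\<exists>g\<in>normalizer (AutoGroup A) U. cohomologous A U (cochain_act A g \<delta>) lam"
    then obtain g where g: "g \<in> normalizer (AutoGroup A) U" "cohomologous A U (cochain_act A g \<delta>) lam" by blast
    show "ext_group A U \<delta> \<cong> ext_group A U lam" by (rule if_dir[OF D L g])
  qed
qed

end
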